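(* Let $\mathcal{H}$ be a Hilbert space, $f,g\colon\mathcal{H}\to\mathbb{R}$ convex continuous, $\mathcal{C}_f=\arg\min f\neq\emptyset$, $f_\ast=\min f$, $r>0$ and $\mathcal{U}_r:=\{x: d(x,\mathcal{C}_f)\le r\}$. Then for every $x\in\mathcal{U}_r$ and every $\delta>0$, $$g(x)-f(x)\;\le\;\big(\|s_g-s_f|_{\mathcal{U}_r}+\delta\big)\,d(x,\mathcal{C}_f)\;+\;\frac{\|s_g-s_f|_{\mathcal{U}_r}}{\delta}\,\big(f(x)-f_\ast\big)\;+\;\|g-f|_{\mathcal{C}_f}.$$
   Context: $\partial f(x)=\{v: f(y)-f(x)\ge\langle v,y-x\rangle\ \forall y\}$ is the convex subdifferential and $s_f(x):=\operatorname{dist}(0,\partial f(x))$ the slope (similarly for $g$). For $\omega\colon\mathcal{H}\to\mathbb{R}$ and $\mathcal{U}\subset\mathcal{H}$, $\|\omega|_{\mathcal{U}}:=\sup_{x\in\mathcal{U}}\max\{\omega(x),0\}$. *)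

theory Defs
  imports "HOL-Analysis.Analysis"
begin

definition subdiff :: "('a::real_inner \<Rightarrow> real) \<Rightarrow> 'a \<Rightarrow> 'a set" where
  "subdiff f x = {v. \<forall>y. f y - f x \<ge> inner v (y - x)}"

definition slope :: "('a::real_inner \<Rightarrow> real) \<Rightarrow> 'a \<Rightarrow> real" where
  "slope f x = infdist 0 (subdiff f x)"

definition possup :: "('a \<Rightarrow> real) \<Rightarrow> 'a set \<Rightarrow> ereal" where
  "possup w U = (SUP x\<in>U. ereal (max (w x) 0))"

end

theory Submission
  imports Defs
begin


lemma quad_mid:
  fixes y z a :: "'a::real_inner"
  shows "(norm ((1/2) *\<^sub>R y + (1/2) *\<^sub>R z - a))\<^sup>2 =
    ((norm (y - a))\<^sup>2 + (norm (z - a))\<^sup>2)/2 - (norm (y - z))\<^sup>2/4"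
proof -
  have e: "(1/2) *\<^sub>R y + (1/2) *\<^sub>R z - a = (1/2) *\<^sub>R ((y - a) + (z - a))"
  proof -
    have "a = (1/2) *\<^sub>R a + (1/2) *\<^sub>R a" by (simp flip: scaleR_add_left)
    then show ?thesis by (metis (no_types, lifting) add_diff_add scaleR_add_right scaleR_diff_right diff_diff_eq2 add_diff_eq)
  qed
  have e2: "y - z = (y - a) - (z - a)" by simp
  show ?thesis unfolding e e2 power2_norm_eq_inner
    by (simp add: inner_diff_left inner_diff_right inner_add_left inner_add_right inner_commute algebra_simps; simp add: field_simps)
qed

lemma quad_seg:
  fixes y z a :: "'a::real_inner"
  shows "(norm (y + t *\<^sub>R (z - y) - a))\<^sup>2 =
    (norm (y - a))\<^sup>2 + 2 * t * inner (y - a) (z - y) + t\<^sup>2 * (norm (z - y))\<^sup>2"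
proof -
  have e: "y + t *\<^sub>R (z - y) - a = (y - a) + t *\<^sub>R (z - y)" by (simp add: algebra_simps)
  show ?thesis unfolding e power2_norm_eq_inner
    by (simp add: inner_add_left inner_add_right inner_commute algebra_simps power2_eq_square)
qed

lemma aux_mid:
  fixes c p q E F G :: real
  assumes "c \<le> 1/2*p + 1/2*q"
  shows "c + ((E+F)/2 - G) \<le> (p + E + (q + F))/2 - G"
  using assms by argo

lemma exists_min_strongly:
  fixes \<phi> :: "'a::{real_inner,complete_space} \<Rightarrow> real"
  assumes K: "closed K" "convex K" "K \<noteq> {}" and cv: "convex_on UNIV \<phi>" and ct: "continuous_on UNIV \<phi>"
    and lb: "\<And>z. z \<in> K \<Longrightarrow> m \<le> \<phi> z" and lam: "l > 0"
  shows "\<exists>y\<in>K. \<forall>z\<in>K. \<phi> y + (norm (y - a))\<^sup>2/(2*l) \<le> \<phi> z + (norm (z - a))\<^sup>2/(2*l)"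
proof -
  define h where "h z = \<phi> z + (norm (z - a))\<^sup>2/(2*l)" for z
  have hlb: "m \<le> h z" if "z \<in> K" for z
    using lb[OF that] lam unfolding h_def by (simp add: add_increasing2)
  have bdd: "bdd_below (h ` K)" using hlb by (metis bdd_belowI2)
  define \<mu> where "\<mu> = Inf (h ` K)"
  have mu_le: "\<mu> \<le> h z" if "z \<in> K" for z
    unfolding \<mu>_def using bdd that by (simp add: cInf_lower)
  have "\<exists>z\<in>K. h z < \<mu> + inverse (real (Suc n))" for n
  proof -
    have "Inf (h ` K) < \<mu> + inverse (real (Suc n))" unfolding \<mu>_def by simp
    from cInf_lessD[OF _ this] K(3) show ?thesis by auto
  qed
  then obtain zs where zs: "\<And>n. zs n \<in> K" "\<And>n. h (zs n) < \<mu> + inverse (real (Suc n))"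
    by metis
  have mid: "(norm (y - z))\<^sup>2 \<le> 8*l*((h y + h z)/2 - \<mu>)" if "y \<in> K" "z \<in> K" for y z
  proof -
    let ?m = "(1/2) *\<^sub>R y + (1/2) *\<^sub>R z"
    have mK: "?m \<in> K" using convexD[OF K(2) that, of "1/2" "1/2"] by simp
    have c1: "\<phi> ?m \<le> (1/2) * \<phi> y + (1/2) * \<phi> z"
      using convex_onD[OF cv, of "1/2" y z] by simp
    have "\<mu> \<le> h ?m" using mu_le mK by blast
    also have "h ?m \<le> (h y + h z)/2 - (norm (y - z))\<^sup>2/(8*l)"
    proof -
      define E where "E = (norm (y - a))\<^sup>2/(2*l)"
      define F where "F = (norm (z - a))\<^sup>2/(2*l)"
      define G where "G = (norm (y - z))\<^sup>2/(8*l)"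
      have "(((norm (y - a))\<^sup>2 + (norm (z - a))\<^sup>2)/2 - (norm (y - z))\<^sup>2/4)/(2*l) = (E+F)/2 - G"
        unfolding E_def F_def G_def using lam by (simp add: field_simps)
      then have eq1: "h ?m = \<phi> ?m + ((E+F)/2 - G)" unfolding h_def quad_mid by simp
      have eq2: "(h y + h z)/2 - (norm (y - z))\<^sup>2/(8*l) = (\<phi> y + E + (\<phi> z + F))/2 - G"
        unfolding h_def E_def F_def G_def by simp
      show ?thesis unfolding eq1 eq2 by (rule aux_mid[OF c1])
    qed
    finally show ?thesis using lam by (simp add: field_simps)
  qed
  have "Cauchy zs"
  proof (rule CauchyI)
    fix e :: real assume e: "e > 0"
    obtain M where M: "8*l/e\<^sup>2 < real M" using reals_Archimedean2 by blast
    have "norm (zs p - zs q) < e" if "p \<ge> M" "q \<ge> M" for p q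
    proof -
      have ip: "inverse (real (Suc p)) \<le> inverse (real (Suc M))" "inverse (real (Suc q)) \<le> inverse (real (Suc M))"
        using that by (auto simp: field_simps)
      have "(norm (zs p - zs q))\<^sup>2 \<le> 8*l*((h (zs p) + h (zs q))/2 - \<mu>)" using mid zs(1) by blast
      also have "\<dots> \<le> 8*l*inverse (real (Suc M))"
      proof -
        have "(h (zs p) + h (zs q))/2 - \<mu> \<le> inverse (real (Suc M))"
          using zs(2)[of p] zs(2)[of q] ip by argo
        then show ?thesis using lam by (simp add: mult_left_mono)
      qed
      also have "\<dots> < e\<^sup>2"
      proof -
        have "8*l < e\<^sup>2 * real M" using M e by (simp add: field_simps)
        moreover have "0 < e\<^sup>2" using e by simp
        ultimately have "8*l < e\<^sup>2 * real (Suc M)" unfolding of_nat_Suc by argo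
        then show ?thesis by (simp add: field_simps)
      qed
      finally show ?thesis using e by (meson abs_le_square_iff less_le_not_le not_le power2_less_imp_less norm_ge_zero)
    qed
    then show "\<exists>M. \<forall>m\<ge>M. \<forall>n\<ge>M. norm (zs m - zs n) < e" by blast
  qed
  then obtain y where y: "zs \<longlonglongrightarrow> y" using Cauchy_convergent_iff convergent_def by blast
  have yK: "y \<in> K" using closed_sequentially[OF K(1) zs(1) y] .
  have hc: "continuous_on UNIV h" unfolding h_def
    by (intro continuous_intros ct) (use lam in auto)
  have lim1: "(\<lambda>n. h (zs n)) \<longlonglongrightarrow> h y"
    using continuous_on_tendsto_compose[OF hc y] by simp
  have lim2: "(\<lambda>n. \<mu> + inverse (real (Suc n))) \<longlonglongrightarrow> \<mu> + 0"
    by (intro tendsto_intros LIMSEQ_inverse_real_of_nat)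
  have "h y \<le> \<mu>"
    using LIMSEQ_le[OF lim1 lim2] zs(2) less_imp_le by auto
  then show ?thesis using yK mu_le unfolding h_def by (meson order_trans)
qed

lemma subgrad_of_min:
  fixes \<phi> :: "'a::real_inner \<Rightarrow> real"
  assumes cv: "convex_on UNIV \<phi>" and lam: "l > 0"
   and loc: "\<And>z. \<exists>t0>0. \<forall>t. 0 < t \<and> t \<le> t0 \<longrightarrow>
      \<phi> y + (norm (y - a))\<^sup>2/(2*l) \<le> \<phi> (y + t *\<^sub>R (z - y)) + (norm (y + t *\<^sub>R (z - y) - a))\<^sup>2/(2*l)"
  shows "\<phi> y + inner ((1/l) *\<^sub>R (a - y)) (z - y) \<le> \<phi> z"
proof -
  obtain t0 where t0: "t0 > 0" "\<And>t. 0 < t \<Longrightarrow> t \<le> t0 \<Longrightarrow>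
      \<phi> y + (norm (y - a))\<^sup>2/(2*l) \<le> \<phi> (y + t *\<^sub>R (z - y)) + (norm (y + t *\<^sub>R (z - y) - a))\<^sup>2/(2*l)"
    using loc[of z] by blast
  define N where "N = (norm (z - y))\<^sup>2"
  define P where "P = inner (y - a) (z - y)"
  define A where "A = \<phi> z - \<phi> y + P/l"
  have N0: "N \<ge> 0" unfolding N_def by simp
  have key: "0 \<le> A + t*N/(2*l)" if t: "0 < t" "t \<le> t0" "t \<le> 1" for t
  proof -
    have c: "\<phi> (y + t *\<^sub>R (z - y)) \<le> (1 - t) * \<phi> y + t * \<phi> z"
      using convex_onD[OF cv, of t y z] t by (simp add: algebra_simps)
    have q: "(norm (y + t *\<^sub>R (z - y) - a))\<^sup>2 = (norm (y - a))\<^sup>2 + 2*t*P + t\<^sup>2*N"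
      unfolding P_def N_def by (rule quad_seg)
    have "\<phi> y + (norm (y - a))\<^sup>2/(2*l) \<le> (1 - t) * \<phi> y + t * \<phi> z + ((norm (y - a))\<^sup>2 + 2*t*P + t\<^sup>2*N)/(2*l)"
      using t0(2)[OF t(1,2)] c unfolding q by argo
    then have "0 \<le> t * (\<phi> z - \<phi> y) + (2*t*P + t\<^sup>2*N)/(2*l)"
      unfolding add_divide_distrib right_diff_distrib left_diff_distrib mult_1 by argo
    also have "\<dots> = t * (A + t*N/(2*l))"
      unfolding A_def using lam by (simp add: field_simps power2_eq_square)
    finally show ?thesis using t(1) by (simp add: zero_le_mult_iff)
  qed
  have "A \<ge> 0"
  proof (rule ccontr)
    assume "\<not> A \<ge> 0"
    then have An: "A < 0" by simp
    define t where "t = min (min t0 1) (-A*l/(N+1))"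
    have tpos: "t > 0" unfolding t_def using t0(1) An lam N0 by (simp add: field_simps mult_neg_pos)
    have "t \<le> -A*l/(N+1)" unfolding t_def by simp
    moreover have N1: "N + 1 > 0" using N0 by simp
    ultimately have "t*(N+1) \<le> -A*l" by (metis pos_le_divide_eq)
    then have "t*N \<le> -A*l" using tpos by (simp add: algebra_simps)
    then have "t*N/(2*l) \<le> (-A*l)/(2*l)" using lam by (intro divide_right_mono) auto
    also have "(-A*l)/(2*l) = -A/2" using lam by simp
    finally have "t*N/(2*l) \<le> -A/2" .
    moreover have "0 \<le> A + t*N/(2*l)" using key[of t] tpos unfolding t_def by simp
    ultimately show False using An by argo
  qed
  moreover have "inner ((1/l) *\<^sub>R (a - y)) (z - y) = - P/l"
    unfolding P_def by (simp add: inner_diff_left)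
  ultimately show ?thesis unfolding A_def by argo
qed

lemma vec_mono:
  fixes vl vm :: "'a::real_inner"
  assumes lp: "la > 0" and lm: "la \<le> mu" and h: "0 \<le> inner (vl - vm) (mu *\<^sub>R vm - la *\<^sub>R vl)"
  shows "(norm vm)\<^sup>2 \<le> (norm vl)\<^sup>2 \<and> (norm (vl - vm))\<^sup>2 \<le> (norm vl)\<^sup>2 - (norm vm)\<^sup>2"
proof -
  define A where "A = inner vl vl"
  define B where "B = inner vm vm"
  define P where "P = inner vl vm"
  define D where "D = (norm (vl - vm))\<^sup>2"
  have D: "D = A + B - 2*P" unfolding D_def A_def B_def P_def power2_norm_eq_inner
    by (simp add: inner_diff_left inner_diff_right inner_commute)
  have D0: "D \<ge> 0" unfolding D_def by simp
  have h': "0 \<le> mu*P - la*A - mu*B + la*P" using h unfolding A_def B_def P_def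
    by (simp add: inner_diff_left inner_diff_right inner_commute algebra_simps)
  have k: "D*(la+mu) \<le> (mu-la)*(A-B)"
  proof -
    have "D*(la+mu) = (A+B)*(la+mu) - 2*((la+mu)*P)" unfolding D by (simp add: algebra_simps)
    moreover have "(la+mu)*P \<ge> la*A + mu*B" using h' by (simp add: algebra_simps)
    ultimately have "D*(la+mu) \<le> (A+B)*(la+mu) - 2*(la*A + mu*B)" by argo
    also have "\<dots> = (mu-la)*(A-B)" by (simp add: algebra_simps)
    finally show ?thesis .
  qed
  have AB: "B \<le> A \<and> D \<le> A - B"
  proof (cases "la = mu")
    case True
    then have "D*(2*la) \<le> 0" using k by simp
    then have "D \<le> 0" using lp by (simp add: mult_le_0_iff)
    then have "D = 0" using D0 by simp
    then have "vl = vm" unfolding D_def by simp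
    then show ?thesis using \<open>D = 0\<close> unfolding A_def B_def by simp
  next
    case False
    then have ml: "mu - la > 0" using lm by simp
    have "0 \<le> (mu-la)*(A-B)" using k D0 lp lm by (smt (verit) mult_nonneg_nonneg)
    then have BA: "B \<le> A" using ml by (simp add: zero_le_mult_iff)
    have "(mu-la)*(A-B) \<le> (la+mu)*(A-B)" using BA lp by (intro mult_right_mono) auto
    then have "D*(la+mu) \<le> (A-B)*(la+mu)" using k by (simp add: algebra_simps)
    then have "D \<le> A - B" using lp lm by (simp add: mult_le_cancel_right)
    then show ?thesis using BA by simp
  qed
  show ?thesis using AB unfolding A_def B_def D_def power2_norm_eq_inner by simp
qed

lemma subgrad_exists:
  fixes g :: "'a::{real_inner,complete_space} \<Rightarrow> real"
  assumes cv: "convex_on UNIV g" and ct: "continuous_on UNIV g"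
  shows "\<exists>w. \<forall>z. g x + inner w (z - x) \<le> g z"
proof -
  obtain \<rho>0 where r0: "\<rho>0 > 0" "\<And>y. dist y x < \<rho>0 \<Longrightarrow> dist (g y) (g x) < 1"
    using ct unfolding continuous_on_iff by (metis UNIV_I zero_less_one)
  define \<rho> where "\<rho> = \<rho>0/2"
  have rp: "\<rho> > 0" unfolding \<rho>_def using r0 by simp
  have gb: "g x - 1 < g y \<and> g y < g x + 1" if "y \<in> cball x \<rho>" for y
  proof -
    have "dist y x < \<rho>0" using that rp unfolding \<rho>_def by (simp add: dist_commute)
    then have "\<bar>g y - g x\<bar> < 1" using r0(2) by (simp add: dist_real_def)
    then show ?thesis by linarith
  qed
  define lam where "lam n = \<rho>\<^sup>2/16 * inverse (real (Suc n))" for n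
  have lpos: "lam n > 0" for n unfolding lam_def using rp by simp
  have lle: "lam n \<le> \<rho>\<^sup>2/16" for n unfolding lam_def
    by (rule mult_left_le) (auto simp: inverse_le_1_iff)
  have lmono: "lam m \<le> lam n" if "n \<le> m" for m n
    unfolding lam_def using that by (intro mult_left_mono le_imp_inverse_le) auto
  have "\<exists>y\<in>cball x \<rho>. \<forall>z\<in>cball x \<rho>. g y + (norm (y - x))\<^sup>2/(2*lam n) \<le> g z + (norm (z - x))\<^sup>2/(2*lam n)" for n
    by (rule exists_min_strongly[OF closed_cball convex_cball _ cv ct _ lpos, of x \<rho> "g x - 1"])
       (use rp gb in \<open>auto intro: less_imp_le\<close>)
  then obtain Y where Y: "\<And>n. Y n \<in> cball x \<rho>"
    "\<And>n z. z \<in> cball x \<rho> \<Longrightarrow> g (Y n) + (norm (Y n - x))\<^sup>2/(2*lam n) \<le> g z + (norm (z - x))\<^sup>2/(2*lam n)"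
    by metis
  have close: "norm (Y n - x) < \<rho>/2" for n
  proof -
    have "g (Y n) + (norm (Y n - x))\<^sup>2/(2*lam n) \<le> g x" using Y(2)[of x n] rp by simp
    then have "(norm (Y n - x))\<^sup>2/(2*lam n) < 1" using gb[OF Y(1)[of n]] by linarith
    then have "(norm (Y n - x))\<^sup>2 < 2*lam n" using lpos[of n] by (simp add: divide_less_eq)
    also have "\<dots> \<le> \<rho>\<^sup>2/8" using lle[of n] by linarith
    also have "\<dots> < (\<rho>/2)\<^sup>2"
    proof -
      have "\<rho>\<^sup>2 > 0" using rp by simp
      moreover have e4: "(\<rho>/2)\<^sup>2 = \<rho>\<^sup>2/4" by (simp add: power_divide)
      ultimately show ?thesis unfolding e4 by linarith
    qed
    finally have "(norm (Y n - x))\<^sup>2 < (\<rho>/2)\<^sup>2" .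
    then show ?thesis by (rule power2_less_imp_less) (use rp in linarith)
  qed
  define V where "V n = (1/lam n) *\<^sub>R (x - Y n)" for n
  have sub: "g (Y n) + inner (V n) (z - Y n) \<le> g z" for n z
    unfolding V_def
  proof (rule subgrad_of_min[OF cv lpos])
    fix z
    define t0 where "t0 = (\<rho>/2)/(norm (z - Y n) + 1)"
    have t0p: "t0 > 0" unfolding t0_def using rp by (intro divide_pos_pos) (auto intro: add_nonneg_pos)
    have "\<forall>t. 0 < t \<and> t \<le> t0 \<longrightarrow> g (Y n) + (norm (Y n - x))\<^sup>2/(2*lam n)
        \<le> g (Y n + t *\<^sub>R (z - Y n)) + (norm (Y n + t *\<^sub>R (z - Y n) - x))\<^sup>2/(2*lam n)"
    proof (intro allI impI)
      fix t assume t: "0 < t \<and> t \<le> t0"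
      have "t * norm (z - Y n) \<le> t0 * norm (z - Y n)" using t by (simp add: mult_right_mono)
      also have "\<dots> \<le> \<rho>/2"
      proof -
        have p: "norm (z - Y n) + 1 > 0" by (simp add: add_nonneg_pos)
        have "norm (z - Y n) / (norm (z - Y n) + 1) \<le> 1" using p by (simp add: pos_divide_le_eq)
        then have "(\<rho>/2) * (norm (z - Y n) / (norm (z - Y n) + 1)) \<le> \<rho>/2" by (rule mult_left_le) (use rp in auto)
        moreover have "t0 * norm (z - Y n) = (\<rho>/2) * (norm (z - Y n) / (norm (z - Y n) + 1))"
          unfolding t0_def by simp
        ultimately show ?thesis by simp
      qed
      finally have tn: "t * norm (z - Y n) \<le> \<rho>/2" .
      have "norm (Y n + t *\<^sub>R (z - Y n) - x) \<le> norm (Y n - x) + norm (t *\<^sub>R (z - Y n))"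
        by (metis add_diff_eq diff_add_eq norm_triangle_ineq add.commute)
      also have "\<dots> = norm (Y n - x) + t * norm (z - Y n)" using t by simp
      also have "\<dots> < \<rho>" using close[of n] tn by linarith
      finally have "Y n + t *\<^sub>R (z - Y n) \<in> cball x \<rho>" by (simp add: dist_norm norm_minus_commute)
      then show "g (Y n) + (norm (Y n - x))\<^sup>2/(2*lam n)
        \<le> g (Y n + t *\<^sub>R (z - Y n)) + (norm (Y n + t *\<^sub>R (z - Y n) - x))\<^sup>2/(2*lam n)" by (rule Y(2))
    qed
    then show "\<exists>t0>0. \<forall>t. 0 < t \<and> t \<le> t0 \<longrightarrow> g (Y n) + (norm (Y n - x))\<^sup>2/(2*lam n)
        \<le> g (Y n + t *\<^sub>R (z - Y n)) + (norm (Y n + t *\<^sub>R (z - Y n) - x))\<^sup>2/(2*lam n)"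
      using t0p by blast
  qed
  have Yeq: "Y n = x - lam n *\<^sub>R V n" for n
    unfolding V_def using lpos[of n] by simp
  have bound: "norm (V n) \<le> 4/\<rho>" for n
  proof (cases "V n = 0")
    case True then show ?thesis using rp by simp
  next
    case False
    then have nv: "norm (V n) > 0" by simp
    define z where "z = Y n + (\<rho>/(2*norm (V n))) *\<^sub>R V n"
    have "norm (z - x) \<le> norm (Y n - x) + norm ((\<rho>/(2*norm (V n))) *\<^sub>R V n)"
      unfolding z_def by (metis add_diff_eq diff_add_eq norm_triangle_ineq add.commute)
    also have "norm ((\<rho>/(2*norm (V n))) *\<^sub>R V n) = \<rho>/2" using nv rp by simp
    finally have "norm (z - x) < \<rho>" using close[of n] by linarith
    then have zc: "z \<in> cball x \<rho>" by (simp add: dist_norm norm_minus_commute)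
    have "inner (V n) (z - Y n) = \<rho>/(2*norm (V n)) * (norm (V n))\<^sup>2"
      unfolding z_def by (simp add: power2_norm_eq_inner)
    also have "\<dots> = \<rho> * norm (V n) / 2" using nv by (simp add: power2_eq_square)
    finally have "\<rho> * norm (V n) / 2 \<le> g z - g (Y n)" using sub[of n z] by linarith
    also have "\<dots> < 2" using gb[OF zc] gb[OF Y(1)[of n]] by linarith
    finally have "\<rho> * norm (V n) < 4" by simp
    then show ?thesis using rp by (simp add: field_simps)
  qed
  define Sq where "Sq n = (norm (V n))\<^sup>2" for n
  have mono: "(norm (V n))\<^sup>2 \<le> (norm (V m))\<^sup>2 \<and> (norm (V m - V n))\<^sup>2 \<le> (norm (V m))\<^sup>2 - (norm (V n))\<^sup>2"
    if "n \<le> m" for m n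
  proof (rule vec_mono[OF lpos lmono[OF that]])
    have a: "g (Y m) + inner (V m) (Y n - Y m) \<le> g (Y n)" by (rule sub)
    have b: "g (Y n) + inner (V n) (Y m - Y n) \<le> g (Y m)" by (rule sub)
    have "0 \<le> inner (V m - V n) (Y m - Y n)"
      using a b by (simp add: inner_diff_left inner_diff_right algebra_simps)
    also have "Y m - Y n = lam n *\<^sub>R V n - lam m *\<^sub>R V m" unfolding Yeq by simp
    finally show "0 \<le> inner (V m - V n) (lam n *\<^sub>R V n - lam m *\<^sub>R V m)" .
  qed
  have "incseq Sq" unfolding Sq_def incseq_def using mono by blast
  moreover have "\<forall>i. Sq i \<le> (4/\<rho>)\<^sup>2" unfolding Sq_def using bound
    by (simp add: power_mono)
  ultimately obtain L where "Sq \<longlonglongrightarrow> L" using incseq_convergent by blast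
  then have CS: "Cauchy Sq" by (rule LIMSEQ_imp_Cauchy)
  have "Cauchy V"
  proof (rule CauchyI)
    fix e :: real assume e: "e > 0"
    obtain M where M: "\<And>m n. m \<ge> M \<Longrightarrow> n \<ge> M \<Longrightarrow> norm (Sq m - Sq n) < e\<^sup>2"
      using CauchyD[OF CS, of "e\<^sup>2"] e by auto
    have "norm (V m - V n) < e" if "m \<ge> M" "n \<ge> M" for m n
    proof -
      have "(norm (V m - V n))\<^sup>2 < e\<^sup>2"
      proof (cases "n \<le> m")
        case True
        then have "(norm (V m - V n))\<^sup>2 \<le> Sq m - Sq n" using mono unfolding Sq_def by blast
        also have "\<dots> < e\<^sup>2" using M[OF that] by simp
        finally show ?thesis .
      next
        case False
        then have "(norm (V n - V m))\<^sup>2 \<le> Sq n - Sq m" using mono[of m n] unfolding Sq_def by simp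
        also have "\<dots> < e\<^sup>2" using M[OF that(2,1)] by simp
        finally show ?thesis by (simp add: norm_minus_commute)
      qed
      then show ?thesis by (rule power2_less_imp_less) (use e in linarith)
    qed
    then show "\<exists>M. \<forall>m\<ge>M. \<forall>n\<ge>M. norm (V m - V n) < e" by blast
  qed
  then obtain w where w: "V \<longlonglongrightarrow> w" using Cauchy_convergent_iff convergent_def by blast
  have lam0: "lam \<longlonglongrightarrow> 0" unfolding lam_def
    using tendsto_mult[OF tendsto_const LIMSEQ_inverse_real_of_nat, of "\<rho>\<^sup>2/16"] by simp
  have Yx: "Y \<longlonglongrightarrow> x"
  proof -
    have "(\<lambda>n. x - lam n *\<^sub>R V n) \<longlonglongrightarrow> x - 0 *\<^sub>R w"
      by (intro tendsto_intros lam0 w)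
    moreover have "Y = (\<lambda>n. x - lam n *\<^sub>R V n)" using Yeq by (simp add: fun_eq_iff)
    ultimately show ?thesis by simp
  qed
  show ?thesis
  proof (intro exI allI)
    fix z
    have "(\<lambda>n. g (Y n) + inner (V n) (z - Y n)) \<longlonglongrightarrow> g x + inner w (z - x)"
      by (intro tendsto_intros continuous_on_tendsto_compose[OF ct Yx] w Yx) auto
    then show "g x + inner w (z - x) \<le> g z"
      by (rule LIMSEQ_le_const2) (use sub in auto)
  qed
qed



lemma slope_bound:
  fixes g :: "'a::real_inner \<Rightarrow> real"
  assumes ex: "\<exists>w. \<forall>z. g p + inner w (z - p) \<le> g z"
  shows "g p - g q \<le> slope g p * norm (p - q)"
proof (rule field_le_epsilon)
  fix e :: real assume e: "e > 0"
  obtain w0 where w0: "\<And>z. g p + inner w0 (z - p) \<le> g z" using ex by blast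
  have ne: "subdiff g p \<noteq> {}"
    using w0 unfolding subdiff_def by (auto simp: algebra_simps intro!: exI[of _ w0])
  define k where "k = norm (p - q) + 1"
  have kp: "k > 0" unfolding k_def by (simp add: add_nonneg_pos)
  have "Inf ((\<lambda>a. dist 0 a) ` subdiff g p) < slope g p + e/k"
    unfolding slope_def infdist_notempty[OF ne] using e kp by simp
  then obtain w where w: "w \<in> subdiff g p" "dist 0 w < slope g p + e/k"
    using cInf_lessD[of "(\<lambda>a. dist 0 a) ` subdiff g p"] ne by blast
  have "inner w (q - p) \<le> g q - g p" using w(1) unfolding subdiff_def by simp
  moreover have "- inner w (q - p) \<le> norm w * norm (p - q)"
  proof -
    have "- inner w (q - p) = inner w (p - q)" by (simp add: inner_diff_right)
    also have "\<dots> \<le> norm w * norm (p - q)" by (rule norm_cauchy_schwarz)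
    finally show ?thesis .
  qed
  moreover have "norm w * norm (p - q) \<le> (slope g p + e/k) * norm (p - q)"
    using w(2) by (intro mult_right_mono) auto
  moreover have "(slope g p + e/k) * norm (p - q) \<le> slope g p * norm (p - q) + e"
  proof -
    have "e/k * norm (p - q) \<le> e"
    proof -
      have "norm (p - q) / k \<le> 1" using kp unfolding k_def by (simp add: pos_divide_le_eq)
      then have "e * (norm (p - q) / k) \<le> e" using e by (intro mult_left_le) auto
      then show ?thesis by simp
    qed
    then show ?thesis by (simp add: distrib_right)
  qed
  ultimately show "g p - g q \<le> slope g p * norm (p - q) + e" by linarith
qed

lemma mono_norm:
  fixes f :: "'a::real_inner \<Rightarrow> real"
  assumes u: "\<And>z. f p + inner u (z - p) \<le> f z" and v: "\<And>z. f q + inner v (z - q) \<le> f z"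
    and pq: "p - q = l *\<^sub>R v" and l: "l > 0"
  shows "norm v \<le> norm u"
proof -
  have "0 \<le> inner (u - v) (p - q)" using u[of q] v[of p]
    by (simp add: inner_diff_left inner_diff_right algebra_simps)
  then have "0 \<le> l * (inner u v - inner v v)" unfolding pq by (simp add: inner_diff_left algebra_simps)
  then have "inner v v \<le> inner u v" using l by (simp add: zero_le_mult_iff)
  also have "\<dots> \<le> norm u * norm v" by (rule norm_cauchy_schwarz)
  finally have "norm v * norm v \<le> norm u * norm v" by (simp add: power2_norm_eq_inner[symmetric] power2_eq_square)
  then show ?thesis by (cases "norm v = 0") (auto simp: mult_le_cancel_right)
qed

lemma dist_step:
  fixes p q c :: "'a::real_inner"
  assumes "inner (p - q) (c - q) \<le> 0"
  shows "norm (q - c) \<le> norm (p - c)"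
proof -
  have "(norm (p - c))\<^sup>2 = (norm (p - q))\<^sup>2 + (norm (q - c))\<^sup>2 + 2 * inner (p - q) (q - c)"
  proof -
    have gen: "(norm (d + e))\<^sup>2 = (norm d)\<^sup>2 + (norm e)\<^sup>2 + 2 * inner d e" for d e :: 'a
      unfolding power2_norm_eq_inner by (simp add: inner_add_left inner_add_right inner_commute)
    show ?thesis using gen[of "p - q" "q - c"] by simp
  qed
  moreover have "inner (p - q) (q - c) = - inner (p - q) (c - q)"
    by (simp add: inner_diff_right)
  moreover have "0 \<le> (norm (p - q))\<^sup>2" by simp
  ultimately have "(norm (q - c))\<^sup>2 \<le> (norm (p - c))\<^sup>2" using assms by linarith
  then show ?thesis by (rule power2_le_imp_le) simp
qed

lemma infdist_cmp:
  fixes C :: "'a::metric_space set"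
  assumes "C \<noteq> {}" "\<And>c. c \<in> C \<Longrightarrow> dist a c \<le> dist b c"
  shows "infdist a C \<le> infdist b C"
  unfolding infdist_notempty[OF assms(1)]
proof (rule cINF_greatest[OF assms(1)])
  fix c assume c: "c \<in> C"
  have "infdist a C \<le> dist a c" using c by (rule infdist_le)
  then show "Inf (dist a ` C) \<le> dist b c" using assms(2)[OF c] unfolding infdist_notempty[OF assms(1)] by linarith
qed

lemma infdist_bound:
  fixes C :: "'a::metric_space set"
  assumes "C \<noteq> {}" "K > 0" "\<And>c. c \<in> C \<Longrightarrow> X \<le> K * dist x c + G"
  shows "X \<le> K * infdist x C + G"
proof -
  have "(X - G)/K \<le> infdist x C"
    unfolding infdist_notempty[OF assms(1)]
  proof (rule cINF_greatest[OF assms(1)])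
    fix c assume "c \<in> C"
    then have "X - G \<le> K * dist x c" using assms(3)[of c] by linarith
    then show "(X - G)/K \<le> dist x c" using assms(2) by (simp add: pos_divide_le_eq mult.commute)
  qed
  then have "X - G \<le> K * infdist x C" using assms(2) by (simp add: pos_divide_le_eq mult.commute)
  then show ?thesis by simp
qed



lemma core:
  fixes f g :: "'a::{real_inner,complete_space} \<Rightarrow> real"
  assumes cvf: "convex_on UNIV f" and ctf: "continuous_on UNIV f"
    and cvg: "convex_on UNIV g" and ctg: "continuous_on UNIV g"
    and Cdef: "C = {z. \<forall>y. f z \<le> f y}" and Cne: "C \<noteq> {}"
    and xr: "infdist x C \<le> r" and dp: "\<delta> > 0"
    and S0: "S \<ge> 0" and Sb: "\<And>u. infdist u C \<le> r \<Longrightarrow> slope g u - slope f u \<le> S"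
    and Gb: "\<And>c. c \<in> C \<Longrightarrow> g c - f c \<le> G"
    and fsb: "\<And>y. fs \<le> f y"
  shows "g x - f x \<le> (S + \<delta>) * infdist x C + S/\<delta> * (f x - fs) + G"
proof -
  obtain u0 where u0: "\<And>z. f x + inner u0 (z - x) \<le> f z" using subgrad_exists[OF cvf ctf] by blast
  define U where "U = norm u0"
  define R where "R = (S + \<delta>) * infdist x C + S/\<delta> * (f x - fs) + G"
  have gsub: "\<exists>w. \<forall>z. g p + inner w (z - p) \<le> g z" for p using subgrad_exists[OF cvg ctg] by blast
  have main: "g x - f x \<le> R + l * (U\<^sup>2 + S*\<delta>)" if lp: "l > 0" for l
  proof -
    have "\<exists>y. \<forall>z. f y + (norm (y - a))\<^sup>2/(2*l) \<le> f z + (norm (z - a))\<^sup>2/(2*l)" for a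
      using exists_min_strongly[OF closed_UNIV convex_UNIV UNIV_not_empty cvf ctf, of fs l a] fsb lp by blast
    then obtain P where P: "\<And>a z. f (P a) + (norm (P a - a))\<^sup>2/(2*l) \<le> f z + (norm (z - a))\<^sup>2/(2*l)"
      by metis
    have Psub: "f (P a) + inner ((1/l) *\<^sub>R (a - P a)) (z - P a) \<le> f z" for a z
      by (rule subgrad_of_min[OF cvf lp]) (use P zero_less_one in blast)
    define xs where "xs n = (P ^^ n) x" for n
    have xs0: "xs 0 = x" unfolding xs_def by simp
    have xsS: "xs (Suc n) = P (xs n)" for n unfolding xs_def by simp
    define v where "v n = (1/l) *\<^sub>R (xs n - xs (Suc n))" for n
    define a where "a n = norm (v n)" for n
    have F1: "f (xs (Suc n)) + inner (v n) (z - xs (Suc n)) \<le> f z" for n z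
      unfolding v_def xsS by (rule Psub)
    have F2: "xs n - xs (Suc n) = l *\<^sub>R v n" for n unfolding v_def using lp by simp
    have F2n: "norm (xs n - xs (Suc n)) = l * a n" for n unfolding F2 a_def using lp by simp
    have a0: "a n \<ge> 0" for n unfolding a_def by simp
    have F3: "l * (a n)\<^sup>2 \<le> f (xs n) - f (xs (Suc n))" for n
    proof -
      have "inner (v n) (xs n - xs (Suc n)) = l * (a n)\<^sup>2" unfolding F2 a_def by (simp add: power2_norm_eq_inner)
      then show ?thesis using F1[of n "xs n"] by linarith
    qed
    have F4: "a (Suc n) \<le> a n" for n
      unfolding a_def by (rule mono_norm[OF F1[of n] F1[of "Suc n"] F2[of "Suc n"] lp])
    have F4': "a 0 \<le> U" unfolding a_def U_def
      by (rule mono_norm[OF _ F1[of 0] _ lp]) (use u0 xs0 F2[of 0] in auto)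
    have aU: "a n \<le> U" for n
    proof (induction n)
      case 0 then show ?case using F4' .
    next
      case (Suc n) then show ?case using F4[of n] by linarith
    qed
    have F5: "slope f (xs (Suc n)) \<le> a n" for n
    proof -
      have "v n \<in> subdiff f (xs (Suc n))" using F1[of n] unfolding subdiff_def by (auto simp: algebra_simps)
      then show ?thesis unfolding slope_def a_def using infdist_le[of "v n" _ 0] by simp
    qed
    have F5': "slope f x \<le> U"
    proof -
      have "u0 \<in> subdiff f x" using u0 unfolding subdiff_def by (auto simp: algebra_simps)
      then show ?thesis unfolding slope_def U_def using infdist_le[of u0 _ 0] by simp
    qed
    define p where "p n = (if n = 0 then U else a (n - 1))" for n
    have bp: "slope f (xs n) \<le> p n" for n by (cases n) (use F5' F5 xs0 in \<open>auto simp: p_def\<close>)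
    have ap: "a n \<le> p n" for n by (cases n) (use F4' F4 in \<open>auto simp: p_def\<close>)
    have pU: "p n \<le> U" for n by (cases n) (use aU in \<open>auto simp: p_def\<close>)
    have F6: "norm (xs n - c) \<le> norm (x - c)" if c: "c \<in> C" for n c
    proof (induction n)
      case 0 show ?case using xs0 by simp
    next
      case (Suc n)
      have "f (xs (Suc n)) + inner (v n) (c - xs (Suc n)) \<le> f c" by (rule F1)
      moreover have "f c \<le> f (xs (Suc n))" using c Cdef by simp
      ultimately have "inner (v n) (c - xs (Suc n)) \<le> 0" by linarith
      then have "inner (xs n - xs (Suc n)) (c - xs (Suc n)) \<le> 0"
        unfolding F2 using lp by (simp add: mult_nonneg_nonpos)
      then have "norm (xs (Suc n) - c) \<le> norm (xs n - c)" by (rule dist_step)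
      then show ?case using Suc.IH by linarith
    qed
    have inU: "infdist (xs n) C \<le> r" for n
    proof -
      have "infdist (xs n) C \<le> infdist x C" by (rule infdist_cmp[OF Cne]) (use F6 in \<open>auto simp: dist_norm\<close>)
      then show ?thesis using xr by linarith
    qed
    have F7: "slope g (xs n) \<le> slope f (xs n) + S" for n using Sb[OF inU[of n]] by linarith
    have D: "(g (xs n) - f (xs n)) - (g (xs (Suc n)) - f (xs (Suc n))) \<le> S*l*a n + l*U*(p n - a n)" for n
    proof -
      have "g (xs n) - g (xs (Suc n)) \<le> slope g (xs n) * (l * a n)"
        using slope_bound[OF gsub, of "xs n" "xs (Suc n)"] F2n by simp
      also have "\<dots> \<le> (p n + S) * (l * a n)" using F7[of n] bp[of n] lp a0[of n]
        by (intro mult_right_mono) auto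
      finally have g1: "g (xs n) - g (xs (Suc n)) \<le> (p n + S) * (l * a n)" .
      have g2: "l * a n * (p n - a n) \<le> l * U * (p n - a n)" using ap[of n] aU[of n] lp a0[of n]
        by (intro mult_right_mono mult_left_mono) auto
      have g3: "(p n + S) * (l * a n) = S*l*a n + l * a n * (p n - a n) + l * (a n)\<^sup>2"
        by (simp add: algebra_simps power2_eq_square)
      show ?thesis using g1 g2 g3 F3[of n] by linarith
    qed
    have Nex: "\<exists>n. a n \<le> \<delta>"
    proof (rule ccontr)
      assume "\<not> ?thesis"
      then have big: "\<And>n. a n > \<delta>" by (meson not_le)
      have grow: "real n * (l * \<delta>\<^sup>2) \<le> f x - f (xs n)" for n
      proof (induction n)
        case 0 then show ?case using xs0 by simp
      next
        case (Suc n)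
        have "l * \<delta>\<^sup>2 \<le> l * (a n)\<^sup>2" using big[of n] dp lp by (intro mult_left_mono power_mono) auto
        moreover have "real (Suc n) * (l * \<delta>\<^sup>2) = real n * (l * \<delta>\<^sup>2) + l * \<delta>\<^sup>2" by (simp add: algebra_simps)
        ultimately show ?case using Suc.IH F3[of n] by linarith
      qed
      obtain n where n: "(f x - fs)/(l*\<delta>\<^sup>2) < real n" using reals_Archimedean2 by blast
      have lpd: "l*\<delta>\<^sup>2 > 0" using lp dp by simp
      have "f x - fs < real n * (l*\<delta>\<^sup>2)" using n lpd by (simp add: pos_divide_less_eq)
      moreover have "f x - f (xs n) \<le> f x - fs" using fsb[of "xs n"] by simp
      ultimately show False using grow[of n] by linarith
    qed
    define N where "N = (LEAST n. a n \<le> \<delta>)"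
    have aN: "a N \<le> \<delta>" unfolding N_def using Nex by (rule LeastI_ex)
    have below: "a n > \<delta>" if "n < N" for n using not_less_Least[OF that[unfolded N_def]] by simp
    have Inv: "n \<le> N \<Longrightarrow> g x - f x \<le> (g (xs n) - f (xs n)) + S/\<delta> * (f x - f (xs n)) + l*U*(U - p n)" for n
    proof (induction n)
      case 0 then show ?case using xs0 by (simp add: p_def)
    next
      case (Suc n)
      then have nN: "n < N" by simp
      have IH: "g x - f x \<le> (g (xs n) - f (xs n)) + S/\<delta> * (f x - f (xs n)) + l*U*(U - p n)"
        using Suc nN by simp
      have k: "S*l*a n \<le> S/\<delta> * (f (xs n) - f (xs (Suc n)))"
      proof -
        have "S*l*a n * \<delta> \<le> S*l*a n * a n" using below[OF nN] S0 lp a0[of n]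
          by (intro mult_left_mono) auto
        also have "\<dots> = S * (l * (a n)\<^sup>2)" by (simp add: power2_eq_square algebra_simps)
        also have "\<dots> \<le> S * (f (xs n) - f (xs (Suc n)))" using F3[of n] S0 by (intro mult_left_mono)
        finally have "S*l*a n * \<delta> \<le> S * (f (xs n) - f (xs (Suc n)))" .
        then show ?thesis using dp by (simp add: pos_le_divide_eq mult.commute mult.left_commute)
      qed
      have pS: "p (Suc n) = a n" by (simp add: p_def)
      have e1: "S/\<delta> * (f x - f (xs n)) + S/\<delta> * (f (xs n) - f (xs (Suc n))) = S/\<delta> * (f x - f (xs (Suc n)))"
        by (simp add: algebra_simps)
      have e2: "l*U*(U - p n) + l*U*(p n - a n) = l*U*(U - a n)" by (simp add: algebra_simps)
      show ?case unfolding pS using IH D[of n] k e1 e2 by linarith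
    qed
    have T: "g (xs (Suc N)) - f (xs (Suc N)) \<le> (\<delta> + S) * infdist x C + G"
    proof (rule infdist_bound[OF Cne])
      show "\<delta> + S > 0" using dp S0 by simp
      fix c assume c: "c \<in> C"
      have "g (xs (Suc N)) - g c \<le> slope g (xs (Suc N)) * norm (xs (Suc N) - c)" by (rule slope_bound[OF gsub])
      also have "\<dots> \<le> (\<delta> + S) * norm (xs (Suc N) - c)" using F7[of "Suc N"] F5[of N] aN
        by (intro mult_right_mono) auto
      also have "\<dots> \<le> (\<delta> + S) * dist x c" using F6[OF c, of "Suc N"] dp S0
        by (simp add: dist_norm mult_left_mono)
      finally have "g (xs (Suc N)) - g c \<le> (\<delta> + S) * dist x c" .
      moreover have "f c \<le> f (xs (Suc N))" using c Cdef by simp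
      ultimately show "g (xs (Suc N)) - f (xs (Suc N)) \<le> (\<delta> + S) * dist x c + G" using Gb[OF c] by linarith
    qed
    have I: "g x - f x \<le> (g (xs N) - f (xs N)) + S/\<delta> * (f x - f (xs N)) + l*U*(U - p N)"
      using Inv by simp
    have DN: "S*l*a N + l*U*(p N - a N) \<le> S*l*\<delta> + l*U*p N"
    proof -
      have "S*l*a N \<le> S*l*\<delta>" using aN S0 lp by (intro mult_left_mono) auto
      moreover have "l*U*(p N - a N) \<le> l*U*p N" using a0[of N] lp aU[of 0] a0[of 0]
        by (simp add: algebra_simps)
      ultimately show ?thesis by linarith
    qed
    have fN: "S/\<delta> * (f x - f (xs N)) \<le> S/\<delta> * (f x - fs)" using fsb[of "xs N"] S0 dp
      by (intro mult_left_mono) auto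
    have e3: "l*U*(U - p N) + (S*l*\<delta> + l*U*p N) = l * (U\<^sup>2 + S*\<delta>)"
      by (simp add: algebra_simps power2_eq_square)
    have e4: "(\<delta> + S) * infdist x C = (S + \<delta>) * infdist x C" by (simp add: add.commute)
    show ?thesis unfolding R_def using I D[of N] DN fN T e3 e4 by linarith
  qed
  show ?thesis
  proof (rule field_le_epsilon)
    fix e :: real assume e: "e > 0"
    define K where "K = U\<^sup>2 + S*\<delta>"
    have K0: "K \<ge> 0" unfolding K_def using S0 dp by simp
    define l where "l = e/(K+1)"
    have lp: "l > 0" unfolding l_def using e K0 by simp
    have "l * K \<le> e"
    proof -
      have "l * K = e * (K/(K+1))" unfolding l_def by simp
      also have "\<dots> \<le> e" using K0 e by (intro mult_left_le) auto
      finally show ?thesis .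
    qed
    then show "g x - f x \<le> (S + \<delta>) * infdist x C + S/\<delta> * (f x - fs) + G + e"
      using main[OF lp] unfolding R_def K_def by linarith
  qed
qed



theorem mainTheorem4:
  fixes f g :: "'a::{real_inner, complete_space} \<Rightarrow> real" and r \<delta> :: real and x :: 'a
  assumes "convex_on UNIV f" "continuous_on UNIV f"
    and "convex_on UNIV g" "continuous_on UNIV g"
    and "{z. \<forall>y. f z \<le> f y} \<noteq> {}"
    and "r > 0"
    and "infdist x {z. \<forall>y. f z \<le> f y} \<le> r"
    and "\<delta> > 0"
  shows "ereal (g x - f x) \<le>
     (possup (\<lambda>z. slope g z - slope f z) {u. infdist u {z. \<forall>y. f z \<le> f y} \<le> r} + ereal \<delta>)
        * ereal (infdist x {z. \<forall>y. f z \<le> f y})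
     + possup (\<lambda>z. slope g z - slope f z) {u. infdist u {z. \<forall>y. f z \<le> f y} \<le> r} / ereal \<delta>
        * ereal (f x - Inf (range f))
     + possup (\<lambda>z. g z - f z) {z. \<forall>y. f z \<le> f y}"
proof -
  note cvf = assms(1) and ctf = assms(2) and cvg = assms(3) and ctg = assms(4) and dp = assms(8)
  define C where "C = {z. \<forall>y. f z \<le> f y}"
  define Ur where "Ur = {u. infdist u C \<le> r}"
  define Se where "Se = possup (\<lambda>z. slope g z - slope f z) Ur"
  define Ge where "Ge = possup (\<lambda>z. g z - f z) C"
  define d where "d = infdist x C"
  define fs where "fs = Inf (range f)"
  have Cne: "C \<noteq> {}" using assms(5) unfolding C_def .
  then obtain c0 where c0: "c0 \<in> C" by blast
  have fsv: "fs = f c0" unfolding fs_def using c0 unfolding C_def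
    by (intro cInf_eq_minimum) auto
  have fsb: "fs \<le> f y" for y using c0 fsv unfolding C_def by simp
  have xr: "infdist x C \<le> r" using assms(7) unfolding C_def .
  have xU: "x \<in> Ur" unfolding Ur_def using xr by simp
  have Sup: "ereal (max (slope g u - slope f u) 0) \<le> Se" if "u \<in> Ur" for u
    unfolding Se_def possup_def using that by (rule SUP_upper)
  have Gup: "ereal (max (g c - f c) 0) \<le> Ge" if "c \<in> C" for c
    unfolding Ge_def possup_def using that by (rule SUP_upper)
  have Se0: "Se \<ge> 0" using Sup[OF xU] by (rule order_trans[rotated]) (metis ereal_less_eq(3) max.cobounded1 max.cobounded2 zero_ereal_def)
  have Ge0: "Ge \<ge> 0" using Gup[OF c0] by (rule order_trans[rotated]) (metis ereal_less_eq(3) max.cobounded1 max.cobounded2 zero_ereal_def)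
  have d0: "d \<ge> 0" unfolding d_def by (rule infdist_nonneg)
  have fx0: "f x - fs \<ge> 0" using fsb[of x] by simp
  have clC: "closed C"
  proof -
    have "C = (\<Inter>y. {z. f z \<le> f y})" unfolding C_def by auto
    moreover have "closed {z. f z \<le> f y}" for y
      by (rule closed_Collect_le[OF ctf continuous_on_const])
    ultimately show ?thesis by auto
  qed
  have T1: "(Se + ereal \<delta>) * ereal d \<ge> 0" using Se0 dp d0 by simp
  have T2: "Se / ereal \<delta> * ereal (f x - fs) \<ge> 0" using Se0 dp fx0 by simp
  have goal: "ereal (g x - f x) \<le> (Se + ereal \<delta>) * ereal d + Se / ereal \<delta> * ereal (f x - fs) + Ge"
  proof (cases "Ge = \<infinity>")
    case True
    then show ?thesis using T1 T2 by simp
  next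
    case Gf: False
    show ?thesis
    proof (cases "d = 0")
      case True
      then have xC: "x \<in> C" using in_closed_iff_infdist_zero[OF clC Cne] unfolding d_def by simp
      then have "f x = fs" using fsb[of x] fsv unfolding C_def by (simp add: antisym)
      moreover have "ereal (g x - f x) \<le> Ge" using Gup[OF xC] by (rule order_trans[rotated]) (metis ereal_less_eq(3) max.cobounded1 max.cobounded2 zero_ereal_def)
      ultimately show ?thesis using True by (simp add: zero_ereal_def[symmetric])
    next
      case dnz: False
      then have dpos: "d > 0" using d0 by simp
      show ?thesis
      proof (cases "Se = \<infinity>")
        case True
        then show ?thesis using dpos dp T2 Ge0 by simp
      next
        case False
        then obtain S where S: "Se = ereal S" using Se0 by (cases Se) auto
        obtain G where G: "Ge = ereal G" using Gf Ge0 by (cases Ge) auto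
        have S0: "S \<ge> 0" using Se0 S by simp
        have Sb: "slope g u - slope f u \<le> S" if "infdist u C \<le> r" for u
        proof -
          have "ereal (max (slope g u - slope f u) 0) \<le> ereal S" using Sup[of u] that S unfolding Ur_def by simp
          then show ?thesis by simp
        qed
        have Gb: "g c - f c \<le> G" if "c \<in> C" for c
        proof -
          have "ereal (max (g c - f c) 0) \<le> ereal G" using Gup[OF that] G by simp
          then show ?thesis by simp
        qed
        have "g x - f x \<le> (S + \<delta>) * infdist x C + S/\<delta> * (f x - fs) + G"
          by (rule core[OF cvf ctf cvg ctg C_def Cne xr dp S0 Sb Gb fsb])
        then show ?thesis unfolding S G d_def using dp by simp
      qed
    qed
  qed
  then show ?thesis unfolding Se_def Ge_def d_def fs_def Ur_def C_def .
qed


end
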